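(* Let $d\geq 2$, $a\in[1/2,1]$, $\kappa\in[1/4,3/4]$ and $\delta>0$. Define for $k\in\mathbb{N}$ the points $x^{k,\delta}\in\mathbb{R}^{d}$ by $x^{k,\delta}=(a(k+1-\kappa)^{-1},0,\dots,0)$ if $k$ is odd and $x^{k,\delta}=(a(k+1-\kappa)^{-1},\delta,0,\dots,0)$ if $k$ is even, and let $f_a:\mathbb{R}^{d}\to\{0,1\}$ be $f_a(x)=1$ if $\lceil a/x_1\rceil$ is an odd integer and $f_a(x)=0$ otherwise. Fix neural network dimensions $\mathbf{N}=(N_L=1,N_{L-1},\dots,N_1,N_0=d)$ with $L\geq 2$. Then there exists $\tilde\varphi\in\mathcal{NN}_{\mathbf{N},L}$ with $\tilde\varphi(x^{k,\delta})=f_a(x^{k,\delta})$ for all $k\in\mathbb{N}$.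
   Context: $\mathcal{NN}_{\mathbf{N},L}$ is the set of maps $\varphi=W^L\rho W^{L-1}\rho\cdots\rho W^1:\mathbb{R}^d\to\mathbb{R}$ where each $W^\ell:\mathbb{R}^{N_{\ell-1}}\to\mathbb{R}^{N_\ell}$ is affine and $\rho(t)=\max\{0,t\}$ is applied coordinatewise. *)

theory Defs
  imports Complex_Main
begin

text \<open>Vectors in R^n are represented as functions nat => real; only the
coordinates 0..n-1 are meaningful (coordinate i here is x_(i+1) in the paper).\<close>

definition relu :: "real \<Rightarrow> real" where
  "relu t = max 0 t"

definition affine_map :: "(nat \<Rightarrow> nat \<Rightarrow> real) \<Rightarrow> (nat \<Rightarrow> real) \<Rightarrow> nat \<Rightarrow> nat
    \<Rightarrow> (nat \<Rightarrow> real) \<Rightarrow> (nat \<Rightarrow> real)" where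
  "affine_map A b n m x = (\<lambda>i. if i < m then (\<Sum>j<n. A i j * x j) + b i else 0)"

fun nn_layers :: "nat list \<Rightarrow> nat \<Rightarrow> (nat \<Rightarrow> nat \<Rightarrow> nat \<Rightarrow> real) \<Rightarrow> (nat \<Rightarrow> nat \<Rightarrow> real)
    \<Rightarrow> nat \<Rightarrow> (nat \<Rightarrow> real) \<Rightarrow> (nat \<Rightarrow> real)" where
  "nn_layers Ns L W B 0 x = (\<lambda>i. if i < Ns ! 0 then x i else 0)"
| "nn_layers Ns L W B (Suc l) x =
     (let y = affine_map (W (Suc l)) (B (Suc l)) (Ns ! l) (Ns ! Suc l) (nn_layers Ns L W B l x)
      in if Suc l = L then y else (\<lambda>i. relu (y i)))"

text \<open>The class NN_{N,L} of ReLU networks R^d -> R with widths N = (N_0,...,N_L),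
N_0 = d, N_L = 1 (given as a list of length L+1).\<close>
definition NN :: "nat list \<Rightarrow> nat \<Rightarrow> ((nat \<Rightarrow> real) \<Rightarrow> real) set" where
  "NN Ns L = {\<phi>. \<exists>W B. \<forall>x. \<phi> x = nn_layers Ns L W B L x 0}"

definition f_a :: "real \<Rightarrow> (nat \<Rightarrow> real) \<Rightarrow> real" where
  "f_a a x = (if odd \<lceil>a / x 0\<rceil> then 1 else 0)"

definition xpt :: "real \<Rightarrow> real \<Rightarrow> real \<Rightarrow> nat \<Rightarrow> (nat \<Rightarrow> real)" where
  "xpt a \<kappa> \<delta> k = (\<lambda>i. if i = 0 then a / (real k + 1 - \<kappa>)
                          else if i = 1 \<and> even k then \<delta> else 0)"

end

theory Submission
  imports Defs
begin

lemma sum_pick: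
  fixes y :: "nat \<Rightarrow> real"
  assumes "m < n"
  shows "(\<Sum>j<n. (if j = m then c else 0) * y j) = c * y m"
proof -
  have "(\<Sum>j<n. (if j = m then c else 0) * y j) = (\<Sum>j<n. if j = m then c * y j else 0)"
    by (rule sum.cong) auto
  also have "\<dots> = c * y m" using assms by (simp add: sum.delta)
  finally show ?thesis .
qed

theorem lemma5p3:
  fixes d L :: nat and Ns :: "nat list" and a \<kappa> \<delta> :: real
  assumes "d \<ge> 2"
    and "1/2 \<le> a" and "a \<le> 1"
    and "1/4 \<le> \<kappa>" and "\<kappa> \<le> 3/4"
    and "\<delta> > 0"
    and "L \<ge> 2"
    and "length Ns = L + 1" and "Ns ! 0 = d" and "Ns ! L = 1"
    and "\<forall>l \<le> L. Ns ! l \<ge> 1"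
  shows "\<exists>\<phi> \<in> NN Ns L. \<forall>k::nat. \<phi> (xpt a \<kappa> \<delta> k) = f_a a (xpt a \<kappa> \<delta> k)"
proof -
  define W :: "nat \<Rightarrow> nat \<Rightarrow> nat \<Rightarrow> real" where
    "W = (\<lambda>l i j. if l = 1 then (if i = 0 \<and> j = 1 then 1/\<delta> else 0)
                  else (if i = 0 \<and> j = 0 then 1 else 0))"
  define B :: "nat \<Rightarrow> nat \<Rightarrow> real" where "B = (\<lambda>l i. 0)"
  have key: "1 \<le> l \<Longrightarrow> l \<le> L \<Longrightarrow> nn_layers Ns L W B l x 0 = x 1 / \<delta>"
    if x1: "x 1 \<ge> 0" for l x
  proof (induction l)
    case 0 then show ?case by simp
  next
    case (Suc l)
    have pos: "Ns ! Suc l \<ge> 1" using Suc.prems assms(11) by auto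
    show ?case
    proof (cases "l = 0")
      case True
      have "(\<Sum>j<Ns ! 0. W 1 0 j * nn_layers Ns L W B 0 x j) = 1/\<delta> * x 1"
        using sum_pick[of 1 "Ns ! 0" "1/\<delta>" "nn_layers Ns L W B 0 x"] assms(1,9)
        unfolding W_def by simp
      moreover have "Suc 0 \<noteq> L" using assms(7) by simp
      ultimately show ?thesis using True pos x1 assms(6)
        by (simp add: affine_map_def B_def Let_def relu_def)
    next
      case False
      have IH: "nn_layers Ns L W B l x 0 = x 1 / \<delta>" using Suc False by simp
      have p0: "Ns ! l \<ge> 1" using Suc.prems assms(11) by auto
      have "(\<Sum>j<Ns ! l. W (Suc l) 0 j * nn_layers Ns L W B l x j) = 1 * (x 1 / \<delta>)"
        using sum_pick[of 0 "Ns ! l" "1" "nn_layers Ns L W B l x"] p0 IH False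
        unfolding W_def by simp
      then have "affine_map (W (Suc l)) (B (Suc l)) (Ns ! l) (Ns ! Suc l) (nn_layers Ns L W B l x) 0
          = x 1 / \<delta>" using pos by (simp add: affine_map_def B_def)
      moreover have "x 1 / \<delta> \<ge> 0" using x1 assms(6) by simp
      ultimately show ?thesis
        by (simp only: nn_layers.simps Let_def if_distrib[of "\<lambda>f. f 0"] relu_def max_absorb2 if_cancel)
    qed
  qed
  define \<phi> where "\<phi> = (\<lambda>x. nn_layers Ns L W B L x 0)"
  have "\<phi> \<in> NN Ns L" unfolding NN_def \<phi>_def by blast
  moreover have "\<forall>k. \<phi> (xpt a \<kappa> \<delta> k) = f_a a (xpt a \<kappa> \<delta> k)"
  proof
    fix k :: nat
    have t: "real k + 1 - \<kappa> > 0" using assms(5) by simp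
    have "a / (a / (real k + 1 - \<kappa>)) = real k + 1 - \<kappa>" using t assms(2) by simp
    moreover have "\<lceil>real k + 1 - \<kappa>\<rceil> = int k + 1"
      using assms(4,5) by (simp add: ceiling_eq_iff)
    ultimately have f: "f_a a (xpt a \<kappa> \<delta> k) = (if even k then 1 else 0)"
      by (simp add: f_a_def xpt_def)
    have "xpt a \<kappa> \<delta> k 1 \<ge> 0" using assms(6) by (simp add: xpt_def)
    from key[of "xpt a \<kappa> \<delta> k" L, OF this] assms(7) have "\<phi> (xpt a \<kappa> \<delta> k) = xpt a \<kappa> \<delta> k 1 / \<delta>"
      by (simp add: \<phi>_def)
    then show "\<phi> (xpt a \<kappa> \<delta> k) = f_a a (xpt a \<kappa> \<delta> k)"
      using f assms(6) by (simp add: xpt_def)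
  qed
  ultimately show ?thesis by blast
qed

end
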